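(* Let $A$ be a finitely generated free abelian group and let $SK_{\mathbb{F}_2}(A/2)^d_i$ be the homogeneous component of weight $d$ and degree $i$ of $SK_{\mathbb{F}_2}(A/2)$. Then: (0) $SK_{\mathbb{F}_2}(A/2)^d_d = \Lambda_{\mathbb{F}_2}^d(A/2)$. (1) $SK_{\mathbb{F}_2}(A/2)^d_{d-1}=\Phi^d(A)$, where $\Phi^1(A)=0$, $\Phi^2(A)=A/2^{(1)}$, $\Phi^3(A)=A/2\otimes A/2^{(1)}$, and for $d\ge 4$, $\Phi^d(A)$ is equivalently (a) the kernel of the unique nonzero morphism $\Gamma^{d-2}_{\mathbb{F}_2}(A/2)\otimes A/2^{(1)}\to\Gamma^{d-4}_{\mathbb{F}_2}(A/2)\otimes\Gamma^2_{\mathbb{F}_2}(A/2^{(1)})$ (induced by comultiplication of $\Gamma_{\mathbb{F}_2}(A/2)$, the Verschiebung $\Gamma^2_{\mathbb{F}_2}(A/2)\to A/2^{(1)}$ and multiplication $(A/2^{(1)})^{\otimes 2}\to\Gamma^2_{\mathbb{F}_2}(A/2^{(1)})$); (b) the image of the unique nonzero morphism $\Gamma^d_{\mathbb{F}_2}(A/2)\to\Gamma^{d-2}_{\mathbb{F}_2}(A/2)\otimes A/2^{(1)}$ (induced by comultiplication and the Verschiebung); (c) the cokernel of the canonical inclusion $\Lambda^d_{\mathbb{F}_2}(A/2)\hookrightarrow\Gamma^d_{\mathbb{F}_2}(A/2)$. (2) For $i<d-1$, $SK_{\mathbb{F}_2}(A/2)^d_i$ is equivalently (a) the kernel of $\partial_{\mathrm{SKos}}:X^d_i\to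 X^d_{i-1}$, (b) the image of $\partial_{\mathrm{SKos}}:X^d_{i+1}\to X^d_i$, (c) the cokernel of $\partial_{\mathrm{SKos}}:X^d_{i+2}\to X^d_{i+1}$, where $X^d_j$ denotes the component of weight $d$ and degree $j$ of $X=\bigotimes_{r\ge0}\Gamma_{\mathbb{F}_2}(A/2^{(r)}[1])$.
   Context: $A/2=A\otimes\mathbb{Z}/2$ and $A/2^{(r)}$ is its $r$-th Frobenius twist (strict polynomial subfunctor of $S^{2^r}_{\mathbb{F}_2}(A/2)$ generated by $2^r$-th powers, of weight $2^r$). $\Gamma_{\mathbb{F}_2}(W[1])$ is the divided power algebra over $\mathbb{F}_2$ on a generator $W$ in degree $1$ (so $\Gamma^k(W)$ sits in degree $k$ and weight $k\cdot$weight$(W)$). The Verschiebung $\Gamma^2_{\mathbb{F}_2}(V)\to V^{(1)}$ is the unique nonzero morphism. On $X=\bigotimes_{r\ge0}\Gamma_{\mathbb{F}_2}(A/2^{(r)}[1])$, $\partial_{\mathrm{SKos}}=\sum_{r\ge0}\partial_r$, where $\partial_r$ acts on factors $r,r+1$ by $\Gamma^d(V)\otimes\Gamma^e(V^{(1)})\to\Gamma^{d-2}(V)\otimes\Gamma^2(V)\otimes\Gamma^e(V^{(1)})\to\Gamma^{d-2}(V)\otimes\Gamma^{e+1}(V^{(1)})$ (comultiplication, then Verschiebung and multiplication), $V=A/2^{(r)}$, and by the identity on other factors; it is a differential of graded algebras. $SK_{\mathbb{F}_2}(A/2)$ is the subalgebra of cycles of $(X,\partial_{\mathrm{SKos}})$.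 *)

theory Defs
  imports Main
begin

(* Concrete model, for A = Z^n (so A/2 = F_2^n with basis e_0..e_{n-1}).
   A basis monomial of X = (X)_{r>=0} Gamma(A/2^(r)[1]) is an exponent function
   m r i = divided-power exponent of the basis vector e_i^(r) of A/2^(r) (i < n).
   The monomial  prod_{r,i} gamma_{m r i}(e_i^(r))  has
     degree  = sum_{r,i} m r i,   weight = sum_{r,i} 2^r * m r i.
   Elements of X over F_2 are finite sets of basis monomials (coefficient 1),
   addition being symmetric difference. *)

definition deg :: "nat \<Rightarrow> nat \<Rightarrow> (nat \<Rightarrow> nat \<Rightarrow> nat) \<Rightarrow> nat" where
  "deg n d m = (\<Sum>r<d. \<Sum>i<n. m r i)"

definition wt :: "nat \<Rightarrow> nat \<Rightarrow> (nat \<Rightarrow> nat \<Rightarrow> nat) \<Rightarrow> nat" where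
  "wt n d m = (\<Sum>r<d. \<Sum>i<n. 2 ^ r * m r i)"

(* basis of X^d_j (weight d, degree j); a nonzero exponent at level r forces 2^r <= d, so r < d *)
definition Bas :: "nat \<Rightarrow> nat \<Rightarrow> nat \<Rightarrow> (nat \<Rightarrow> nat \<Rightarrow> nat) set" where
  "Bas n d j = {m. (\<forall>r i. m r i \<noteq> 0 \<longrightarrow> r < d \<and> i < n) \<and> deg n d m = j \<and> wt n d m = d}"

definition Xsp :: "nat \<Rightarrow> nat \<Rightarrow> nat \<Rightarrow> (nat \<Rightarrow> nat \<Rightarrow> nat) set set" where
  "Xsp n d j = Pow (Bas n d j)"

definition step :: "(nat \<Rightarrow> nat \<Rightarrow> nat) \<Rightarrow> nat \<Rightarrow> nat \<Rightarrow> (nat \<Rightarrow> nat \<Rightarrow> nat)" where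
  "step m r i = (\<lambda>r' i'. if r' = r \<and> i' = i then m r i - 2
                         else if r' = Suc r \<and> i' = i then Suc (m (Suc r) i)
                         else m r' i')"

(* partial_SKos on a basis monomial: comultiplication picks gamma_2(e_i^(r)) (coefficient 1),
   the Verschiebung sends gamma_2(e_i^(r)) to e_i^(r+1) and kills e_i e_k (i ~= k),
   multiplication e_i^(r+1) * gamma_b(e_i^(r+1)) = (b+1) gamma_{b+1}(e_i^(r+1)),
   nonzero mod 2 iff b is even. *)
definition dmono :: "(nat \<Rightarrow> nat \<Rightarrow> nat) \<Rightarrow> (nat \<Rightarrow> nat \<Rightarrow> nat) set" where
  "dmono m = {step m r i | r i. 2 \<le> m r i \<and> even (m (Suc r) i)}"

definition dlin :: "(nat \<Rightarrow> nat \<Rightarrow> nat) set \<Rightarrow> (nat \<Rightarrow> nat \<Rightarrow> nat) set" where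
  "dlin S = {y. odd (card {m \<in> S. y \<in> dmono m})}"

definition SK :: "nat \<Rightarrow> nat \<Rightarrow> nat \<Rightarrow> (nat \<Rightarrow> nat \<Rightarrow> nat) set set" where
  "SK n d j = {S \<in> Xsp n d j. dlin S = {}}"

(* Lambda^d(A/2) inside Gamma^d(A/2) = X^d_d: span of square-free products e_{i1}...e_{id} *)
definition Lam :: "nat \<Rightarrow> nat \<Rightarrow> (nat \<Rightarrow> nat \<Rightarrow> nat) set set" where
  "Lam n d = {S \<in> Xsp n d d. \<forall>m\<in>S. \<forall>i. m 0 i \<le> 1}"

end

theory Submission
  imports Defs
begin




definition sd :: "'a set \<Rightarrow> 'a set \<Rightarrow> 'a set" where
  "sd A B = (A - B) \<union> (B - A)"

definition xs :: "('b \<Rightarrow> 'a set) \<Rightarrow> 'b set \<Rightarrow> 'a set" where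
  "xs f S = {y. odd (card {x\<in>S. y \<in> f x})}"

lemma xs_empty[simp]: "xs f {} = {}"
  by (simp add: xs_def)

lemma xs_insert:
  assumes "finite S" "a \<notin> S"
  shows "xs f (insert a S) = sd (f a) (xs f S)"
proof -
  have "\<And>y. card {x\<in>insert a S. y \<in> f x} = (if y \<in> f a then Suc (card {x\<in>S. y \<in> f x}) else card {x\<in>S. y \<in> f x})"
  proof -
    fix y
    show "card {x\<in>insert a S. y \<in> f x} = (if y \<in> f a then Suc (card {x\<in>S. y \<in> f x}) else card {x\<in>S. y \<in> f x})"
    proof (cases "y \<in> f a")
      case True
      then have "{x\<in>insert a S. y \<in> f x} = insert a {x\<in>S. y \<in> f x}" by auto
      then show ?thesis using True assms by simp
    next
      case False
      then have "{x\<in>insert a S. y \<in> f x} = {x\<in>S. y \<in> f x}" by auto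
      then show ?thesis using False by simp
    qed
  qed
  then show ?thesis unfolding xs_def sd_def by auto
qed

lemma xs_sub: "xs f S \<subseteq> \<Union>(f ` S)"
proof
  fix y assume "y \<in> xs f S"
  then have "odd (card {x\<in>S. y \<in> f x})" unfolding xs_def by simp
  then have "{x\<in>S. y \<in> f x} \<noteq> {}" by (intro notI) simp
  then show "y \<in> \<Union>(f ` S)" by auto
qed

lemma xs_fin: "finite S \<Longrightarrow> (\<And>x. x \<in> S \<Longrightarrow> finite (f x)) \<Longrightarrow> finite (xs f S)"
  by (meson finite_UN_I finite_subset xs_sub)

lemma xs_sd:
  assumes "finite A" "finite B"
  shows "xs f (sd A B) = sd (xs f A) (xs f B)"
proof -
  have "odd (card {x\<in>sd A B. y \<in> f x}) \<longleftrightarrow> odd (card {x\<in>A. y \<in> f x}) \<noteq> odd (card {x\<in>B. y \<in> f x})" for y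
  proof -
    let ?P = "\<lambda>x. y \<in> f x"
    have fin: "finite (A - B)" "finite (B - A)" "finite (A \<inter> B)" using assms by auto
    have e1: "{x\<in>sd A B. ?P x} = {x\<in>A - B. ?P x} \<union> {x\<in>B - A. ?P x}" unfolding sd_def by auto
    have e2: "{x\<in>A. ?P x} = {x\<in>A - B. ?P x} \<union> {x\<in>A \<inter> B. ?P x}" by auto
    have e3: "{x\<in>B. ?P x} = {x\<in>B - A. ?P x} \<union> {x\<in>A \<inter> B. ?P x}" by auto
    have c1: "card {x\<in>sd A B. ?P x} = card {x\<in>A - B. ?P x} + card {x\<in>B - A. ?P x}"
      unfolding e1 by (rule card_Un_disjoint) (use assms in auto)
    have c2: "card {x\<in>A. ?P x} = card {x\<in>A - B. ?P x} + card {x\<in>A \<inter> B. ?P x}"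
      unfolding e2 by (rule card_Un_disjoint) (use assms in auto)
    have c3: "card {x\<in>B. ?P x} = card {x\<in>B - A. ?P x} + card {x\<in>A \<inter> B. ?P x}"
      unfolding e3 by (rule card_Un_disjoint) (use assms in auto)
    show ?thesis unfolding c1 c2 c3 by presburger
  qed
  then show ?thesis unfolding xs_def sd_def by auto
qed

lemma sd_assoc_comm: "sd (sd X Y) (sd Z W) = sd (sd X Z) (sd Y W)"
  unfolding sd_def by blast

lemma xs_sd_fun:
  assumes "finite S"
  shows "sd (xs f S) (xs g S) = xs (\<lambda>x. sd (f x) (g x)) S"
  using assms
proof (induction S rule: finite_induct)
  case empty then show ?case by (simp add: sd_def)
next
  case (insert a S)
  then show ?case by (simp add: xs_insert sd_assoc_comm)
qed

lemma xs_comp: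
  assumes "finite S" "\<And>x. x \<in> S \<Longrightarrow> finite (f x)"
  shows "xs g (xs f S) = xs (\<lambda>x. xs g (f x)) S"
  using assms
proof (induction S rule: finite_induct)
  case empty then show ?case by simp
next
  case (insert a S)
  have fa: "finite (f a)" using insert by auto
  have fS: "finite (xs f S)" using insert by (intro xs_fin) auto
  have "xs g (xs f (insert a S)) = xs g (sd (f a) (xs f S))" using insert by (simp add: xs_insert)
  also have "\<dots> = sd (xs g (f a)) (xs g (xs f S))" using fa fS by (rule xs_sd)
  also have "\<dots> = sd (xs g (f a)) (xs (\<lambda>x. xs g (f x)) S)" using insert by simp
  also have "\<dots> = xs (\<lambda>x. xs g (f x)) (insert a S)" using insert by (simp add: xs_insert)
  finally show ?case .
qed

lemma xs_cong: "(\<And>x. x \<in> S \<Longrightarrow> f x = g x) \<Longrightarrow> xs f S = xs g S"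
proof -
  assume h: "\<And>x. x \<in> S \<Longrightarrow> f x = g x"
  have "{x\<in>S. y \<in> f x} = {x\<in>S. y \<in> g x}" for y using h by auto
  then show ?thesis unfolding xs_def by simp
qed

lemma xs_id: "xs (\<lambda>x. {x}) S = S"
proof -
  have "{x\<in>S. y \<in> {x}} = (if y \<in> S then {y} else {})" for y by auto
  then show ?thesis unfolding xs_def by auto
qed

lemma xs_image:
  assumes "inj_on g V"
  shows "xs f (g ` V) = xs (f \<circ> g) V"
proof -
  have "{x\<in>g ` V. y \<in> f x} = g ` {s\<in>V. y \<in> f (g s)}" for y by auto
  moreover have "card (g ` {s\<in>V. y \<in> f (g s)}) = card {s\<in>V. y \<in> f (g s)}" for y
    by (rule card_image) (rule inj_on_subset[OF assms], auto)
  ultimately show ?thesis unfolding xs_def by auto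
qed

lemma xs_singles:
  assumes "inj_on g V"
  shows "xs (\<lambda>s. {g s}) V = g ` V"
proof -
  have "card {s\<in>V. y \<in> {g s}} = (if y \<in> g ` V then 1 else 0)" for y
  proof (cases "y \<in> g ` V")
    case True
    then obtain s0 where s0: "s0 \<in> V" "y = g s0" by auto
    have "{s\<in>V. y \<in> {g s}} = {s0}" using s0 assms by (auto simp: inj_on_def)
    then show ?thesis using True by simp
  next
    case False
    have "{s\<in>V. y \<in> {g s}} = {}" using False by blast
    then have "card {s\<in>V. y \<in> {g s}} = 0" by (simp only: card.empty)
    then show ?thesis using False by simp
  qed
  then show ?thesis unfolding xs_def by auto
qed

lemma xs_single[simp]: "xs f {a} = f a"
  by (simp add: xs_insert sd_def)

lemma even_invol:
  assumes "finite A" "\<And>x. x \<in> A \<Longrightarrow> f x \<in> A \<and> f x \<noteq> x \<and> f (f x) = x"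
  shows "even (card A)"
  using assms
proof (induction "card A" arbitrary: A rule: less_induct)
  case less
  show ?case
  proof (cases "A = {}")
    case True then show ?thesis by simp
  next
    case False
    then obtain x where x: "x \<in> A" by blast
    let ?B = "A - {x, f x}"
    have fx: "f x \<in> A" "f x \<noteq> x" "f (f x) = x" using less.prems(2)[OF x] by blast+
    have sub: "{x, f x} \<subseteq> A" using x fx(1) by blast
    have c2: "card {x, f x} = 2" using fx(2) by simp
    have "card ?B = card A - card {x, f x}"
      by (rule card_Diff_subset) (simp, rule sub)
    moreover have "card {x, f x} \<le> card A" by (rule card_mono[OF less.prems(1) sub])
    ultimately have cB: "card A = card ?B + 2" using c2 by linarith
    have cl: "f y \<in> ?B \<and> f y \<noteq> y \<and> f (f y) = y" if y: "y \<in> ?B" for y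
    proof -
      have yA: "y \<in> A" "y \<noteq> x" "y \<noteq> f x" using y by blast+
      have h: "f y \<in> A" "f y \<noteq> y" "f (f y) = y" using less.prems(2)[OF yA(1)] by blast+
      have "f y \<noteq> x"
      proof
        assume "f y = x"
        then have "f x = y" using h(3) by (simp only:)
        then show False using yA(3) by simp
      qed
      moreover have "f y \<noteq> f x"
      proof
        assume "f y = f x"
        have "y = f (f y)" using h(3) by simp
        also have "\<dots> = f (f x)" using \<open>f y = f x\<close> by simp
        also have "\<dots> = x" by (rule fx(3))
        finally have "y = x" .
        then show False using yA(2) by simp
      qed
      ultimately show ?thesis using h by blast
    qed
    have "even (card ?B)"
      apply (rule less.hyps)
      using cB apply simp
      using less.prems(1) apply simp
      using cl apply blast
      done
    then show ?thesis using cB by simp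
  qed
qed


definition valid :: "(nat \<Rightarrow> nat \<Rightarrow> nat) \<Rightarrow> nat \<Rightarrow> nat \<Rightarrow> bool" where
  "valid m r i \<longleftrightarrow> 2 \<le> m r i \<and> even (m (Suc r) i)"
definition cand :: "(nat \<Rightarrow> nat \<Rightarrow> nat) \<Rightarrow> nat \<Rightarrow> nat \<Rightarrow> bool" where
  "cand m r i \<longleftrightarrow> odd (m (Suc r) i) \<or> 2 \<le> m r i"
definition lexl :: "nat \<Rightarrow> nat \<Rightarrow> nat \<Rightarrow> nat \<Rightarrow> bool" where
  "lexl r' i' r i \<longleftrightarrow> r' < r \<or> (r' = r \<and> i' < i)"
definition ismin :: "(nat \<Rightarrow> nat \<Rightarrow> nat) \<Rightarrow> nat \<Rightarrow> nat \<Rightarrow> bool" where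
  "ismin m r i \<longleftrightarrow> cand m r i \<and> (\<forall>r' i'. lexl r' i' r i \<longrightarrow> \<not> cand m r' i')"
definition ustep :: "(nat \<Rightarrow> nat \<Rightarrow> nat) \<Rightarrow> nat \<Rightarrow> nat \<Rightarrow> (nat \<Rightarrow> nat \<Rightarrow> nat)" where
  "ustep m r i = (\<lambda>r' i'. if r' = r \<and> i' = i then m r i + 2
                         else if r' = Suc r \<and> i' = i then m (Suc r) i - 1
                         else m r' i')"
definition hmono :: "(nat \<Rightarrow> nat \<Rightarrow> nat) \<Rightarrow> (nat \<Rightarrow> nat \<Rightarrow> nat) set" where
  "hmono m = {ustep m r i | r i. ismin m r i \<and> odd (m (Suc r) i)}"

lemma ismin_unique:
  assumes "ismin m r i" "ismin m r' i'" shows "r' = r \<and> i' = i"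
proof -
  have "\<not> lexl r i r' i'" using assms unfolding ismin_def by blast
  moreover have "\<not> lexl r' i' r i" using assms unfolding ismin_def by blast
  ultimately show ?thesis unfolding lexl_def by linarith
qed

lemma hmono_eq:
  assumes "ismin m r i" shows "hmono m = (if odd (m (Suc r) i) then {ustep m r i} else {})"
proof -
  have "hmono m = {y. y = ustep m r i \<and> odd (m (Suc r) i)}"
  proof
    show "hmono m \<subseteq> {y. y = ustep m r i \<and> odd (m (Suc r) i)}"
    proof
      fix y assume "y \<in> hmono m"
      then obtain r' i' where y: "y = ustep m r' i'" "ismin m r' i'" "odd (m (Suc r') i')"
        unfolding hmono_def by blast
      have "r' = r \<and> i' = i" by (rule ismin_unique[OF assms y(2)])
      then show "y \<in> {y. y = ustep m r i \<and> odd (m (Suc r) i)}" using y by simp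
    qed
  next
    show "{y. y = ustep m r i \<and> odd (m (Suc r) i)} \<subseteq> hmono m"
      using assms unfolding hmono_def by blast
  qed
  then show ?thesis by auto
qed

lemma ex_min:
  assumes "cand m r i" shows "\<exists>r0 i0. ismin m r0 i0"
proof -
  define r0 where "r0 = (LEAST r. \<exists>i. cand m r i)"
  have "\<exists>i. cand m r0 i" unfolding r0_def by (rule LeastI[of _ r]) (use assms in blast)
  define i0 where "i0 = (LEAST i. cand m r0 i)"
  have c: "cand m r0 i0" unfolding i0_def by (rule LeastI_ex) fact
  have "\<not> cand m r' i'" if "lexl r' i' r0 i0" for r' i'
  proof (cases "r' < r0")
    case True then show ?thesis unfolding r0_def using not_less_Least by blast
  next
    case False
    then have "r' = r0" "i' < i0" using that unfolding lexl_def by auto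
    then show ?thesis unfolding i0_def using not_less_Least by blast
  qed
  then show ?thesis using c unfolding ismin_def by blast
qed

lemma valid_cand: "valid m r i \<Longrightarrow> cand m r i"
  unfolding valid_def cand_def by auto

lemma dmono_img: "dmono m = (\<lambda>(r,i). step m r i) ` {(r,i). valid m r i}"
  unfolding dmono_def valid_def by auto

lemma step_inj: "inj_on (\<lambda>(r,i). step m r i) {(r,i). valid m r i}"
proof (rule inj_onI, clarsimp)
  fix r i r' i'
  assume v: "valid m r i" "valid m r' i'" and e: "step m r i = step m r' i'"
  have "step m r i r i = step m r' i' r i" using e by simp
  then show "r = r' \<and> i = i'" using v unfolding step_def valid_def
    by (auto split: if_splits)
qed

lemma even_m2: "2 \<le> (x::nat) \<Longrightarrow> even (x - 2) \<longleftrightarrow> even x"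
  by presburger

lemma step_val: "step m r i r' i' = (if r' = r \<and> i' = i then m r i - 2
   else if r' = Suc r \<and> i' = i then Suc (m (Suc r) i) else m r' i')"
  unfolding step_def by simp

lemma valid_step:
  assumes "valid m r i"
  shows "valid (step m r i) r' i' \<longleftrightarrow> valid m r' i' \<and> (r', i') \<noteq> (r, i)"
proof -
  have a: "2 \<le> m r i" "even (m (Suc r) i)" using assms unfolding valid_def by auto
  consider (same) "r' = r \<and> i' = i" | (up) "r' = Suc r \<and> i' = i" | (down) "Suc r' = r \<and> i' = i"
    | (other) "\<not> (r' = r \<and> i' = i)" "\<not> (r' = Suc r \<and> i' = i)" "\<not> (Suc r' = r \<and> i' = i)"
    by blast
  then show ?thesis
  proof cases
    case same then show ?thesis using a by (auto simp: valid_def step_val)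
  next
    case up then show ?thesis using a by (auto simp: valid_def step_val)
  next
    case down then show ?thesis using a even_m2[OF a(1)] by (auto simp: valid_def step_val)
  next
    case other then show ?thesis by (auto simp: valid_def step_val)
  qed
qed

lemma step_comm:
  assumes "valid m r i" "valid m r' i'" "(r, i) \<noteq> (r', i')"
  shows "step (step m r i) r' i' = step (step m r' i') r i"
proof -
  have a: "2 \<le> m r i" "2 \<le> m r' i'" using assms unfolding valid_def by auto
  show ?thesis
    unfolding fun_eq_iff step_val using a assms(3) by auto
qed



lemma ustep_val: "ustep m r i r' i' = (if r' = r \<and> i' = i then m r i + 2
   else if r' = Suc r \<and> i' = i then m (Suc r) i - 1 else m r' i')"
  unfolding ustep_def by simp

lemma step_same: "\<not> (r' = r \<and> i' = i) \<Longrightarrow> \<not> (r' = Suc r \<and> i' = i) \<Longrightarrow> step m r i r' i' = m r' i'"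
  by (auto simp add: step_val)

lemma ustep_same: "\<not> (r' = r \<and> i' = i) \<Longrightarrow> \<not> (r' = Suc r \<and> i' = i) \<Longrightarrow> ustep m r i r' i' = m r' i'"
  by (auto simp add: ustep_val)

lemma par_step:
  assumes "2 \<le> m r i" "\<not> (r' = Suc r \<and> i' = i)"
  shows "even (step m r i r' i') = even (m r' i')"
proof (cases "r' = r \<and> i' = i")
  case True
  then show ?thesis using assms(1) by (simp add: step_val even_m2)
next
  case False
  then show ?thesis using assms(2) by (auto simp add: step_val)
qed

lemma par_ustep: "\<not> (r' = Suc r \<and> i' = i) \<Longrightarrow> even (ustep m r i r' i') = even (m r' i')"
  by (auto simp add: ustep_val)

lemma cand_step:
  assumes "2 \<le> m r i" "\<not> (r' = r \<and> i' = i)" "\<not> (r' = Suc r \<and> i' = i)"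
  shows "cand (step m r i) r' i' = cand m r' i'"
proof -
  have "step m r i r' i' = m r' i'" using assms by (auto simp add: step_val)
  moreover have "even (step m r i (Suc r') i') = even (m (Suc r') i')"
    using assms by (intro par_step) auto
  ultimately show ?thesis unfolding cand_def by simp
qed

lemma cand_ustep:
  assumes "\<not> (r' = r \<and> i' = i)" "\<not> (r' = Suc r \<and> i' = i)"
  shows "cand (ustep m r i) r' i' = cand m r' i'"
proof -
  have "ustep m r i r' i' = m r' i'" using assms by (auto simp add: ustep_val)
  moreover have "even (ustep m r i (Suc r') i') = even (m (Suc r') i')"
    using assms by (intro par_ustep) auto
  ultimately show ?thesis unfolding cand_def by simp
qed

lemma valid_ustep_same:
  assumes "\<not> (r' = r \<and> i' = i)" "\<not> (r' = Suc r \<and> i' = i)"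
  shows "valid (ustep m r i) r' i' = valid m r' i'"
proof -
  have "ustep m r i r' i' = m r' i'" using assms by (auto simp add: ustep_val)
  moreover have "even (ustep m r i (Suc r') i') = even (m (Suc r') i')"
    using assms by (intro par_ustep) auto
  ultimately show ?thesis unfolding valid_def by simp
qed

lemma lex_facts:
  "lexl a b c d \<Longrightarrow> \<not> (a = c \<and> b = d)"
  "lexl a b c d \<Longrightarrow> \<not> (c = Suc a \<and> d = b) \<or> True"
  "lexl a b c d \<Longrightarrow> \<not> (a = Suc c \<and> b = d)"
  "lexl a b c d \<Longrightarrow> lexl c d e f \<Longrightarrow> lexl a b e f"
  "lexl a b c d \<Longrightarrow> \<not> lexl c d a b"
  "\<not> lexl a b c d \<Longrightarrow> \<not> (a = c \<and> b = d) \<Longrightarrow> lexl c d a b"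
  unfolding lexl_def by auto

lemma L1:
  assumes "ismin m r0 i0" "valid m r i" "(r, i) \<noteq> (r0, i0)"
  shows "ismin (step m r i) r0 i0 \<and> (even (step m r i (Suc r0) i0) \<longleftrightarrow> even (m (Suc r0) i0))"
proof -
  have v2: "2 \<le> m r i" using assms(2) unfolding valid_def by simp
  have nl: "\<not> lexl r i r0 i0" using assms(1) valid_cand[OF assms(2)] unfolding ismin_def by blast
  have ge: "lexl r0 i0 r i" using lex_facts(6)[OF nl] assms(3) by auto
  have c0: "cand (step m r i) r0 i0 = cand m r0 i0"
    by (rule cand_step[of m r i, OF v2]) (use ge in \<open>auto simp: lexl_def\<close>)
  have "\<not> cand (step m r i) r' i'" if l: "lexl r' i' r0 i0" for r' i'
  proof -
    have l2: "lexl r' i' r i" using lex_facts(4)[OF l ge] .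
    have "cand (step m r i) r' i' = cand m r' i'"
      by (rule cand_step[of m r i, OF v2]) (use l2 in \<open>auto simp: lexl_def\<close>)
    then show ?thesis using assms(1) l unfolding ismin_def by blast
  qed
  moreover have "even (step m r i (Suc r0) i0) \<longleftrightarrow> even (m (Suc r0) i0)"
    by (rule par_step[of m r i, OF v2]) (use assms(3) in auto)
  ultimately show ?thesis using c0 assms(1) unfolding ismin_def by blast
qed


lemma caseU:
  assumes "ismin m r0 i0" "odd (m (Suc r0) i0)"
  shows "valid (ustep m r0 i0) r i \<longleftrightarrow> (valid m r i \<or> (r, i) = (r0, i0))"
    and "step (ustep m r0 i0) r0 i0 = m"
    and "valid m r i \<Longrightarrow> step (ustep m r0 i0) r i = ustep (step m r i) r0 i0"
    and "valid m r i \<Longrightarrow> step (ustep m r0 i0) r i \<noteq> m"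
proof -
  have o1: "1 \<le> m (Suc r0) i0" using assms(2) by (cases "m (Suc r0) i0") auto
  have ge: "lexl r0 i0 r i" if v: "valid m r i" for r i
  proof -
    have nl: "\<not> lexl r i r0 i0" using assms(1) valid_cand[OF v] unfolding ismin_def by blast
    have "(r, i) \<noteq> (r0, i0)" using v assms(2) unfolding valid_def by auto
    then show ?thesis using lex_facts(6)[OF nl] by auto
  qed
  show "valid (ustep m r0 i0) r i \<longleftrightarrow> (valid m r i \<or> (r, i) = (r0, i0))"
  proof (cases "r = r0 \<and> i = i0")
    case True
    have "even (m (Suc r0) i0 - 1)" using assms(2) o1 by presburger
    then show ?thesis using True assms(2) unfolding valid_def by (auto simp: ustep_val)
  next
    case F1: False
    show ?thesis
    proof (cases "r = Suc r0 \<and> i = i0")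
      case True
      have "2 \<le> m (Suc r0) i0 - 1 \<longleftrightarrow> 2 \<le> m (Suc r0) i0" using assms(2) by presburger
      then show ?thesis using True unfolding valid_def by (auto simp: ustep_val)
    next
      case False
      then show ?thesis using F1 valid_ustep_same[of r r0 i i0 m] by auto
    qed
  qed
  show "step (ustep m r0 i0) r0 i0 = m"
    using o1 unfolding fun_eq_iff step_val ustep_val by auto
  show "valid m r i \<Longrightarrow> step (ustep m r0 i0) r i = ustep (step m r i) r0 i0"
  proof -
    assume v: "valid m r i"
    have g: "lexl r0 i0 r i" by (rule ge[OF v])
    have v2: "2 \<le> m r i" using v unfolding valid_def by simp
    show ?thesis
      using g v2 o1 unfolding fun_eq_iff step_val ustep_val lexl_def by auto
  qed
  show "valid m r i \<Longrightarrow> step (ustep m r0 i0) r i \<noteq> m"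
  proof
    assume v: "valid m r i" and e: "step (ustep m r0 i0) r i = m"
    have g: "lexl r0 i0 r i" by (rule ge[OF v])
    have "step (ustep m r0 i0) r i r0 i0 = m r0 i0" using e by simp
    then show False using g unfolding lexl_def by (auto simp: step_val ustep_val)
  qed
qed

lemma caseD:
  assumes "ismin m r0 i0" "even (m (Suc r0) i0)"
  shows "valid m r0 i0" "ismin (step m r0 i0) r0 i0" "odd (step m r0 i0 (Suc r0) i0)"
    "ustep (step m r0 i0) r0 i0 = m"
proof -
  show v: "valid m r0 i0" using assms unfolding ismin_def cand_def valid_def by auto
  have v2: "2 \<le> m r0 i0" using v unfolding valid_def by simp
  show o: "odd (step m r0 i0 (Suc r0) i0)" using assms(2) by (simp add: step_val)
  have c0: "cand (step m r0 i0) r0 i0" using o unfolding cand_def by simp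
  have "\<not> cand (step m r0 i0) r' i'" if l: "lexl r' i' r0 i0" for r' i'
  proof -
    have "cand (step m r0 i0) r' i' = cand m r' i'"
      by (rule cand_step[of m r0 i0, OF v2]) (use l in \<open>auto simp: lexl_def\<close>)
    then show ?thesis using assms(1) l unfolding ismin_def by blast
  qed
  then show "ismin (step m r0 i0) r0 i0" using c0 unfolding ismin_def by blast
  show "ustep (step m r0 i0) r0 i0 = m"
    using v2 unfolding fun_eq_iff step_val ustep_val by auto
qed



lemma xs_point:
  assumes "c \<in> V" shows "xs (\<lambda>p. if p = c then {a} else {}) V = {a}"
proof -
  have "{p\<in>V. y \<in> (if p = c then {a} else {})} = (if y = a then {c} else {})" for y
    using assms by auto
  then show ?thesis unfolding xs_def by auto
qed

lemma hom_id:
  assumes ex: "\<exists>r i. cand m r i"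
  shows "sd (xs dmono (hmono m)) (xs hmono (dmono m)) = {m}"
proof -
  obtain r0 i0 where mn: "ismin m r0 i0" using ex ex_min by blast
  let ?V = "{(r,i). valid m r i}"
  let ?F = "\<lambda>(r,i). step m r i"
  have dm: "xs hmono (dmono m) = xs (hmono \<circ> ?F) ?V" unfolding dmono_img by (rule xs_image[OF step_inj])
  show ?thesis
  proof (cases "odd (m (Suc r0) i0)")
    case True
    let ?m' = "ustep m r0 i0"
    let ?F' = "\<lambda>(r,i). step ?m' r i"
    have hm: "hmono m = {?m'}" using hmono_eq[OF mn] True by simp
    have V': "{(r,i). valid ?m' r i} = insert (r0,i0) ?V" using caseU(1)[OF mn True] by auto
    have d1: "xs dmono (hmono m) = insert m (?F' ` ?V)"
      unfolding hm xs_single dmono_img V' using caseU(2)[OF mn True] by simp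
    have "xs (hmono \<circ> ?F) ?V = xs (\<lambda>p. {?F' p}) ?V"
    proof (rule xs_cong)
      fix p assume p: "p \<in> ?V"
      obtain r i where pri: "p = (r,i)" by (cases p)
      have v: "valid m r i" using p pri by simp
      have ne: "(r,i) \<noteq> (r0,i0)" using v True unfolding valid_def by auto
      have L: "ismin (step m r i) r0 i0" "odd (step m r i (Suc r0) i0)" using L1[OF mn v ne] True by auto
      show "(hmono \<circ> ?F) p = {?F' p}" using hmono_eq[OF L(1)] L(2) caseU(3)[OF mn True v] pri by simp
    qed
    also have "\<dots> = ?F' ` ?V"
      by (rule xs_singles) (rule inj_on_subset[OF step_inj], use V' in auto)
    finally have d2: "xs hmono (dmono m) = ?F' ` ?V" using dm by simp
    have nm: "m \<notin> ?F' ` ?V"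
    proof
      assume "m \<in> ?F' ` ?V"
      then obtain r i where ri: "valid m r i" "step ?m' r i = m" by auto
      show False using caseU(4)[OF mn True ri(1)] ri(2) by (rule notE)
    qed
    show ?thesis unfolding d1 d2 sd_def using nm by auto
  next
    case False
    have hm: "hmono m = {}" using hmono_eq[OF mn] False by simp
    have D: "valid m r0 i0" "ismin (step m r0 i0) r0 i0" "odd (step m r0 i0 (Suc r0) i0)"
      "ustep (step m r0 i0) r0 i0 = m"
      using caseD[OF mn] False by auto
    have "xs (hmono \<circ> ?F) ?V = xs (\<lambda>p. if p = (r0,i0) then {m} else {}) ?V"
    proof (rule xs_cong)
      fix p assume p: "p \<in> ?V"
      obtain r i where pri: "p = (r,i)" by (cases p)
      have v: "valid m r i" using p pri by simp
      show "(hmono \<circ> ?F) p = (if p = (r0,i0) then {m} else {})"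
      proof (cases "(r,i) = (r0,i0)")
        case True
        then show ?thesis using hmono_eq[OF D(2)] D(3) D(4) pri by auto
      next
        case ne: False
        have L: "ismin (step m r i) r0 i0" "even (step m r i (Suc r0) i0)"
          using L1[OF mn v ne] False by auto
        show ?thesis using hmono_eq[OF L(1)] L(2) pri ne by auto
      qed
    qed
    also have "\<dots> = {m}" by (rule xs_point) (use D(1) in auto)
    finally show ?thesis unfolding hm dm sd_def by simp
  qed
qed

lemma dd:
  assumes fin: "finite {(r,i). valid m r i}"
  shows "xs dmono (dmono m) = {}"
proof -
  let ?V = "{(r,i). valid m r i}"
  let ?F = "\<lambda>(r,i). step m r i"
  define G where "G p = (\<lambda>(r,i). step (?F p) r i)" for p
  have e1: "xs dmono (dmono m) = xs (dmono \<circ> ?F) ?V" unfolding dmono_img by (rule xs_image[OF step_inj])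
  have Vp: "{(r,i). valid (?F p) r i} = ?V - {p}" if "p \<in> ?V" for p
    using that valid_step by (cases p) auto
  have dF: "(dmono \<circ> ?F) p = G p ` (?V - {p})" if "p \<in> ?V" for p
    using Vp[OF that] unfolding G_def by (simp add: dmono_img)
  have injG: "inj_on (G p) (?V - {p})" if "p \<in> ?V" for p
    unfolding G_def using step_inj[of "?F p"] Vp[OF that] by simp
  have symG: "G p q = G q p" if "p \<in> ?V" "q \<in> ?V" "p \<noteq> q" for p q
    using that step_comm unfolding G_def by (cases p, cases q) auto
  have ev: "even (card {p\<in>?V. y \<in> G p ` (?V - {p})})" for y
  proof -
    let ?P = "{pq \<in> ?V \<times> ?V. fst pq \<noteq> snd pq \<and> G (fst pq) (snd pq) = y}"
    have finP: "finite ?P" using fin by (auto intro: finite_subset[of _ "?V \<times> ?V"])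
    have im: "fst ` ?P = {p\<in>?V. y \<in> G p ` (?V - {p})}" by force
    have inj: "inj_on fst ?P"
    proof (rule inj_onI)
      fix a b assume a: "a \<in> ?P" and b: "b \<in> ?P" and e: "fst a = fst b"
      have fa: "fst a \<in> ?V" using a by (auto simp: mem_Times_iff)
      have Ga: "G (fst a) (snd a) = y" using a by blast
      have Gb: "G (fst a) (snd b) = y" using b e by simp
      have sa: "snd a \<in> ?V - {fst a}" using a by (auto simp: mem_Times_iff)
      have sb: "snd b \<in> ?V - {fst a}" using b e by (auto simp: mem_Times_iff)
      have "snd a = snd b" by (rule inj_onD[OF injG[OF fa]]) (use Ga Gb sa sb in simp_all)
      then show "a = b" using e by (simp add: prod_eq_iff)
    qed
    have "even (card ?P)"
    proof (rule even_invol[OF finP, of prod.swap])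
      fix x assume x: "x \<in> ?P"
      then show "prod.swap x \<in> ?P \<and> prod.swap x \<noteq> x \<and> prod.swap (prod.swap x) = x"
        using symG by (cases x) auto
    qed
    moreover have "card (fst ` ?P) = card ?P" by (rule card_image[OF inj])
    ultimately show ?thesis using im by simp
  qed
  have "xs (dmono \<circ> ?F) ?V = xs (\<lambda>p. G p ` (?V - {p})) ?V"
    by (rule xs_cong) (rule dF)
  also have "\<dots> = {}" unfolding xs_def using ev by simp
  finally show ?thesis using e1 by simp
qed



definition sok :: "nat \<Rightarrow> nat \<Rightarrow> (nat \<Rightarrow> nat \<Rightarrow> nat) \<Rightarrow> bool" where
  "sok n d m \<longleftrightarrow> (\<forall>r i. m r i \<noteq> 0 \<longrightarrow> r < d \<and> i < n)"

lemma Bas_iff: "m \<in> Bas n d j \<longleftrightarrow> sok n d m \<and> deg n d m = j \<and> wt n d m = d"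
  unfolding Bas_def sok_def by simp

lemma deg_eq: "deg n d m = (\<Sum>(r,i)\<in>{..<d}\<times>{..<n}. m r i)"
  unfolding deg_def by (simp add: sum.cartesian_product)

lemma wt_eq: "wt n d m = (\<Sum>(r,i)\<in>{..<d}\<times>{..<n}. 2 ^ r * m r i)"
  unfolding wt_def by (simp add: sum.cartesian_product)

lemma sum_two:
  fixes f g :: "'a \<Rightarrow> nat"
  assumes A: "finite A" and ab: "a \<in> A" "b \<in> A" "a \<noteq> b"
    and eq: "\<And>p. p \<in> A \<Longrightarrow> p \<noteq> a \<Longrightarrow> p \<noteq> b \<Longrightarrow> f p = g p"
  shows "sum f A + g a + g b = sum g A + f a + f b"
proof -
  have b': "b \<in> A - {a}" using ab by simp
  have f1: "sum f A = f a + sum f (A - {a})" by (rule sum.remove[OF A ab(1)])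
  have f2: "sum f (A - {a}) = f b + sum f (A - {a} - {b})" by (rule sum.remove) (use A b' in auto)
  have g1: "sum g A = g a + sum g (A - {a})" by (rule sum.remove[OF A ab(1)])
  have g2: "sum g (A - {a}) = g b + sum g (A - {a} - {b})" by (rule sum.remove) (use A b' in auto)
  have "sum f (A - {a} - {b}) = sum g (A - {a} - {b})" by (rule sum.cong) (use eq in auto)
  then show ?thesis using f1 f2 g1 g2 by linarith
qed

lemma term_le_deg:
  assumes "r < d" "i < n" shows "m r i \<le> deg n d m"
  unfolding deg_eq
  using member_le_sum[of "(r,i)" "{..<d}\<times>{..<n}" "\<lambda>(r,i). m r i"] assms by simp

lemma term_le_wt:
  assumes "r < d" "i < n" shows "2 ^ r * m r i \<le> wt n d m"
  unfolding wt_eq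
  using member_le_sum[of "(r,i)" "{..<d}\<times>{..<n}" "\<lambda>(r,i). 2 ^ r * m r i"] assms by simp

lemma step_Bas:
  assumes m: "m \<in> Bas n d (Suc j)" and v: "valid m r i"
  shows "step m r i \<in> Bas n d j"
proof -
  have s: "sok n d m" "deg n d m = Suc j" "wt n d m = d" using m by (auto simp: Bas_iff)
  have v2: "2 \<le> m r i" using v unfolding valid_def by simp
  then have ri: "r < d" "i < n" using s(1) unfolding sok_def by (metis not_numeral_le_zero)+
  have "2 ^ Suc r \<le> 2 ^ r * m r i" using v2 by simp
  also have "\<dots> \<le> d" using term_le_wt[OF ri, of m] s(3) by simp
  finally have "Suc r < d" using less_exp[of "Suc r"] by linarith
  then have sr: "Suc r < d" .
  have sk: "sok n d (step m r i)"
    using s(1) ri sr unfolding sok_def by (auto simp: step_val split: if_splits)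
  let ?D = "{..<d}\<times>{..<n}"
  have fD: "finite ?D" by simp
  have inD: "(r,i) \<in> ?D" "(Suc r, i) \<in> ?D" using ri sr by auto
  have dg: "(\<Sum>(r',i')\<in>?D. step m r i r' i') + m r i + m (Suc r) i
      = (\<Sum>(r',i')\<in>?D. m r' i') + step m r i r i + step m r i (Suc r) i"
    by (rule sum_two[OF fD inD, of "\<lambda>(r',i'). step m r i r' i'" "\<lambda>(r',i'). m r' i'", simplified])
       (auto simp: step_val split: if_splits)
  let ?f = "\<lambda>(r',i'). 2 ^ r' * step m r i r' i'"
  let ?g = "\<lambda>(r',i'). 2 ^ r' * m r' i'"
  have wg: "sum ?f ?D + ?g (r,i) + ?g (Suc r,i) = sum ?g ?D + ?f (r,i) + ?f (Suc r, i)"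
    by (rule sum_two[OF fD inD]) (auto simp: step_val split: if_splits)
  obtain x where x: "m r i = x + 2" using v2 by (metis add.commute le_Suc_ex)
  have p1: "step m r i r i = x" "step m r i (Suc r) i = Suc (m (Suc r) i)" using x by (simp_all add: step_val)
  have "deg n d (step m r i) = j" using dg s(2) x p1 unfolding deg_eq by simp
  moreover have "wt n d (step m r i) = d" using wg s(3) x p1 unfolding wt_eq by (simp add: algebra_simps)
  ultimately show ?thesis using sk by (simp add: Bas_iff)
qed

lemma ustep_Bas:
  assumes m: "m \<in> Bas n d j" and o: "odd (m (Suc r) i)"
  shows "ustep m r i \<in> Bas n d (Suc j)"
proof -
  have s: "sok n d m" "deg n d m = j" "wt n d m = d" using m by (auto simp: Bas_iff)
  have nz: "m (Suc r) i \<noteq> 0" using odd_pos[OF o] by simp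
  then have sr: "Suc r < d" "i < n" using s(1) unfolding sok_def by blast+
  then have ri: "r < d" by simp
  have sk: "sok n d (ustep m r i)"
    using s(1) ri sr unfolding sok_def by (auto simp: ustep_val split: if_splits)
  let ?D = "{..<d}\<times>{..<n}"
  have fD: "finite ?D" by simp
  have inD: "(r,i) \<in> ?D" "(Suc r, i) \<in> ?D" using ri sr by auto
  have dg: "(\<Sum>(r',i')\<in>?D. ustep m r i r' i') + m r i + m (Suc r) i
      = (\<Sum>(r',i')\<in>?D. m r' i') + ustep m r i r i + ustep m r i (Suc r) i"
    by (rule sum_two[OF fD inD, of "\<lambda>(r',i'). ustep m r i r' i'" "\<lambda>(r',i'). m r' i'", simplified])
       (auto simp: ustep_val split: if_splits)
  let ?f = "\<lambda>(r',i'). 2 ^ r' * ustep m r i r' i'"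
  let ?g = "\<lambda>(r',i'). 2 ^ r' * m r' i'"
  have wg: "sum ?f ?D + ?g (r,i) + ?g (Suc r,i) = sum ?g ?D + ?f (r,i) + ?f (Suc r, i)"
    by (rule sum_two[OF fD inD]) (auto simp: ustep_val split: if_splits)
  obtain y where y: "m (Suc r) i = Suc y" using nz by (cases "m (Suc r) i") auto
  have p1: "ustep m r i r i = m r i + 2" "ustep m r i (Suc r) i = y" using y by (simp_all add: ustep_val)
  have "deg n d (ustep m r i) = Suc j" using dg s(2) y p1 unfolding deg_eq by simp
  moreover have "wt n d (ustep m r i) = d" using wg s(3) y p1 unfolding wt_eq by (simp add: algebra_simps)
  ultimately show ?thesis using sk by (simp add: Bas_iff)
qed



lemma valid_sub:
  assumes "sok n d m" shows "{(r,i). valid m r i} \<subseteq> {..<d}\<times>{..<n}"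
proof
  fix p assume "p \<in> {(r,i). valid m r i}"
  then obtain r i where p: "p = (r,i)" "valid m r i" by blast
  then have "m r i \<noteq> 0" unfolding valid_def by simp
  then show "p \<in> {..<d}\<times>{..<n}" using assms p(1) unfolding sok_def by blast
qed

lemma valid_fin: "sok n d m \<Longrightarrow> finite {(r,i). valid m r i}"
  by (rule finite_subset[OF valid_sub]) simp_all

lemma dmono_fin: "sok n d m \<Longrightarrow> finite (dmono m)"
  unfolding dmono_img by (rule finite_imageI) (rule valid_fin)

lemma hmono_fin: "finite (hmono m)"
proof (cases "\<exists>r i. ismin m r i")
  case True
  then obtain r i where "ismin m r i" by blast
  then show ?thesis using hmono_eq by simp
next
  case False
  then have "hmono m = {}" unfolding hmono_def by blast
  then show ?thesis by simp
qed

lemma hmono_Bas: "m \<in> Bas n d j \<Longrightarrow> hmono m \<subseteq> Bas n d (Suc j)"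
  unfolding hmono_def using ustep_Bas by blast

lemma dmono_Bas:
  assumes m: "m \<in> Bas n d (Suc j)" shows "dmono m \<subseteq> Bas n d j"
proof
  fix y assume "y \<in> dmono m"
  then obtain r i where "y = step m r i" "valid m r i" unfolding dmono_def valid_def by blast
  then show "y \<in> Bas n d j" using step_Bas[OF m] by simp
qed

lemma cand_ex:
  assumes m: "m \<in> Bas n d j" and jd: "j < d"
  shows "\<exists>r i. cand m r i"
proof (rule ccontr)
  assume "\<not> (\<exists>r i. cand m r i)"
  then have nc0: "\<not> cand m r i" for r i by blast
  have nc: "m r i \<le> 1 \<and> even (m (Suc r) i)" for r i using nc0[of r i] unfolding cand_def by simp
  have eq: "2 ^ r * m r i = m r i" for r i
  proof (cases r)
    case 0 then show ?thesis by simp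
  next
    case (Suc r')
    have "m r i \<le> 1" "even (m r i)" using nc[of r i] nc[of r' i] Suc by auto
    then have "m r i = 0" by presburger
    then show ?thesis by simp
  qed
  have "wt n d m = deg n d m" unfolding wt_eq deg_eq by (rule sum.cong) (auto simp: eq)
  then show False using m jd by (simp add: Bas_iff)
qed

lemma Bas_fin: "finite (Bas n d j)"
proof -
  let ?G = "{g::nat\<Rightarrow>nat. \<forall>i. (i \<in> {..<n} \<longrightarrow> g i \<in> {..j}) \<and> (i \<notin> {..<n} \<longrightarrow> g i = 0)}"
  have fG: "finite ?G" by (rule finite_set_of_finite_funs) auto
  let ?H = "{m::nat\<Rightarrow>nat\<Rightarrow>nat. \<forall>r. (r \<in> {..<d} \<longrightarrow> m r \<in> ?G) \<and> (r \<notin> {..<d} \<longrightarrow> m r = (\<lambda>_. 0))}"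
  have fH: "finite ?H" by (rule finite_set_of_finite_funs[OF _ fG]) auto
  have "Bas n d j \<subseteq> ?H"
  proof
    fix m assume m: "m \<in> Bas n d j"
    have s: "sok n d m" "deg n d m = j" using m by (auto simp: Bas_iff)
    have "m r i \<le> j" if "r < d" "i < n" for r i using term_le_deg[OF that, of m] s(2) by simp
    moreover have "m r i = 0" if "\<not> (r < d \<and> i < n)" for r i using s(1) that unfolding sok_def by blast
    ultimately show "m \<in> ?H" by (auto simp: fun_eq_iff)
  qed
  then show ?thesis using fH finite_subset by blast
qed

lemma top0:
  assumes m: "m \<in> Bas n d d" and r: "0 < r"
  shows "m r i = 0"
proof (cases "r < d \<and> i < n")
  case False
  then show ?thesis using m unfolding Bas_iff sok_def by blast
next
  case True
  have s: "deg n d m = d" "wt n d m = d" using m by (auto simp: Bas_iff)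
  have se: "(\<Sum>(r,i)\<in>{..<d}\<times>{..<n}. m r i) = (\<Sum>(r,i)\<in>{..<d}\<times>{..<n}. 2 ^ r * m r i)"
    using s unfolding deg_eq wt_eq by simp
  have "(\<lambda>(r,i). m r i) (r,i) = (\<lambda>(r,i). 2 ^ r * m r i) (r,i)"
    by (rule sum_mono_inv[OF se]) (use True in auto)
  then have e: "m r i = 2 ^ r * m r i" by simp
  have "2 \<le> (2::nat) ^ r" using r by (cases r) auto
  have "m r i * 2 ^ r = m r i * 1" by (metis e mult.commute mult_1_right)
  then have "m r i = 0 \<or> 2 ^ r = (1::nat)" by (simp only: mult_cancel_left)
  then show ?thesis using \<open>2 \<le> (2::nat) ^ r\<close> by auto
qed

lemma us_st: "2 \<le> m r i \<Longrightarrow> ustep (step m r i) r i = m"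
  unfolding fun_eq_iff step_val ustep_val by auto

lemma dlin_xs: "dlin S = xs dmono S"
  unfolding dlin_def xs_def ..

lemma SK_iff: "S \<in> SK n d j \<longleftrightarrow> S \<subseteq> Bas n d j \<and> xs dmono S = {}"
  unfolding SK_def Xsp_def dlin_xs by auto

lemma exact:
  assumes jd: "j < d"
  shows "SK n d j = dlin ` Xsp n d (Suc j)"
proof
  show "SK n d j \<subseteq> dlin ` Xsp n d (Suc j)"
  proof
    fix S assume "S \<in> SK n d j"
    then have S: "S \<subseteq> Bas n d j" "xs dmono S = {}" by (auto simp: SK_iff)
    have fS: "finite S" using S(1) Bas_fin finite_subset by blast
    let ?T = "xs hmono S"
    have TB: "?T \<subseteq> Bas n d (Suc j)" using xs_sub[of hmono S] hmono_Bas S(1) by blast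
    have A: "xs dmono ?T = xs (\<lambda>m. xs dmono (hmono m)) S"
      by (rule xs_comp[OF fS]) (rule hmono_fin)
    have B: "xs hmono (xs dmono S) = xs (\<lambda>m. xs hmono (dmono m)) S"
    proof (rule xs_comp[OF fS])
      fix m assume "m \<in> S"
      then have "sok n d m" using S(1) by (auto simp: Bas_iff)
      then show "finite (dmono m)" by (rule dmono_fin)
    qed
    have "sd (xs dmono ?T) (xs hmono (xs dmono S)) = xs (\<lambda>m. sd (xs dmono (hmono m)) (xs hmono (dmono m))) S"
      unfolding A B by (rule xs_sd_fun[OF fS])
    also have "\<dots> = xs (\<lambda>m. {m}) S"
    proof (rule xs_cong)
      fix m assume "m \<in> S"
      then have mB: "m \<in> Bas n d j" using S(1) by blast
      show "sd (xs dmono (hmono m)) (xs hmono (dmono m)) = {m}"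
        using cand_ex[OF mB jd] by (rule hom_id)
    qed
    also have "\<dots> = S" by (rule xs_id)
    finally have "xs dmono ?T = S" using S(2) by (simp add: sd_def)
    then have "S = dlin ?T" by (simp add: dlin_xs)
    moreover have "?T \<in> Xsp n d (Suc j)" using TB by (simp add: Xsp_def)
    ultimately show "S \<in> dlin ` Xsp n d (Suc j)" by blast
  qed
next
  show "dlin ` Xsp n d (Suc j) \<subseteq> SK n d j"
  proof
    fix S assume "S \<in> dlin ` Xsp n d (Suc j)"
    then obtain T where T: "T \<subseteq> Bas n d (Suc j)" "S = xs dmono T" by (auto simp: Xsp_def dlin_xs)
    have fT: "finite T" using T(1) Bas_fin finite_subset by blast
    have SB: "S \<subseteq> Bas n d j" using xs_sub[of dmono T] dmono_Bas T by blast
    have "xs dmono S = xs (\<lambda>m. xs dmono (dmono m)) T"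
      unfolding T(2)
    proof (rule xs_comp[OF fT])
      fix m assume "m \<in> T"
      then have "sok n d m" using T(1) by (auto simp: Bas_iff)
      then show "finite (dmono m)" by (rule dmono_fin)
    qed
    also have "\<dots> = xs (\<lambda>m. {}) T"
    proof (rule xs_cong)
      fix m assume "m \<in> T"
      then have "sok n d m" using T(1) by (auto simp: Bas_iff)
      then show "xs dmono (dmono m) = {}" by (intro dd valid_fin)
    qed
    also have "\<dots> = {}" by (simp add: xs_def)
    finally show "S \<in> SK n d j" using SB by (simp add: SK_iff)
  qed
qed



lemma top_valid:
  assumes m: "m \<in> Bas n d d"
  shows "valid m r i \<longleftrightarrow> (r = 0 \<and> 2 \<le> m 0 i)"
proof
  assume v: "valid m r i"
  then have v2: "2 \<le> m r i" unfolding valid_def by simp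
  have "r = 0"
  proof (rule ccontr)
    assume "r \<noteq> 0"
    then have "m r i = 0" using top0[OF m] by simp
    then show False using v2 by simp
  qed
  then show "r = 0 \<and> 2 \<le> m 0 i" using v2 by simp
next
  assume h: "r = 0 \<and> 2 \<le> m 0 i"
  have "m (Suc 0) i = 0" using top0[OF m] by simp
  then show "valid m r i" using h unfolding valid_def by simp
qed

lemma top:
  "SK n d d = Lam n d"
proof
  show "SK n d d \<subseteq> Lam n d"
  proof
    fix S assume "S \<in> SK n d d"
    then have S: "S \<subseteq> Bas n d d" "xs dmono S = {}" by (auto simp: SK_iff)
    have "m 0 i \<le> 1" if mS: "m \<in> S" for m i
    proof (rule ccontr)
      assume "\<not> m 0 i \<le> 1"
      then have m2: "2 \<le> m 0 i" by simp
      have mB: "m \<in> Bas n d d" using mS S(1) by blast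
      let ?y = "step m 0 i"
      have "{m'\<in>S. ?y \<in> dmono m'} = {m}"
      proof
        show "{m} \<subseteq> {m'\<in>S. ?y \<in> dmono m'}"
        proof -
          have "valid m 0 i" using top_valid[OF mB] m2 by simp
          then have "?y \<in> dmono m" unfolding dmono_def valid_def by blast
          then show ?thesis using mS by blast
        qed
      next
        show "{m'\<in>S. ?y \<in> dmono m'} \<subseteq> {m}"
        proof
          fix m' assume "m' \<in> {m'\<in>S. ?y \<in> dmono m'}"
          then have m'S: "m' \<in> S" and yd: "?y \<in> dmono m'" by auto
          have m'B: "m' \<in> Bas n d d" using m'S S(1) by blast
          obtain r' i' where yy: "?y = step m' r' i'" and v': "valid m' r' i'"
            using yd unfolding dmono_def valid_def by blast
          have r'0: "r' = 0" and m'2: "2 \<le> m' 0 i'" using top_valid[OF m'B] v' by auto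
          have a: "?y (Suc 0) i' = Suc 0"
            using yy r'0 top0[OF m'B, of "Suc 0" i'] by (simp add: step_val)
          have b: "?y (Suc 0) i' = (if i' = i then Suc 0 else 0)"
            using top0[OF mB, of "Suc 0"] by (simp add: step_val)
          have ii: "i' = i" using a b by (cases "i' = i") auto
          have "m' = ustep (step m' 0 i) 0 i" using us_st[of m' 0 i] m'2 ii by simp
          also have "\<dots> = ustep ?y 0 i" using yy r'0 ii by simp
          also have "\<dots> = m" using us_st m2 by simp
          finally show "m' \<in> {m}" by simp
        qed
      qed
      then have "?y \<in> xs dmono S" unfolding xs_def by simp
      then show False using S(2) by simp
    qed
    then show "S \<in> Lam n d" using S(1) unfolding Lam_def Xsp_def by auto
  qed
next
  show "Lam n d \<subseteq> SK n d d"
  proof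
    fix S assume "S \<in> Lam n d"
    then have S: "S \<subseteq> Bas n d d" and sq: "\<And>m i. m \<in> S \<Longrightarrow> m 0 i \<le> 1"
      unfolding Lam_def Xsp_def by auto
    have "dmono m = {}" if mS: "m \<in> S" for m
    proof -
      have "\<not> valid m r i" for r i using top_valid[of m n d r i] S mS sq[OF mS, of i] by auto
      then show ?thesis unfolding dmono_def valid_def by blast
    qed
    then have "xs dmono S = {}" using xs_sub[of dmono S] by blast
    then show "S \<in> SK n d d" using S by (simp add: SK_iff)
  qed
qed

lemma Bas0:
  assumes "1 \<le> d" shows "Bas n d 0 = {}"
proof (rule ccontr)
  assume "Bas n d 0 \<noteq> {}"
  then obtain m where m: "m \<in> Bas n d 0" by blast
  have s: "deg n d m = 0" "wt n d m = d" using m by (auto simp: Bas_iff)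
  have z: "\<forall>p\<in>{..<d}\<times>{..<n}. (\<lambda>(r,i). m r i) p = 0" using s(1) unfolding deg_eq by simp
  have "wt n d m = 0" unfolding wt_eq by (rule sum.neutral) (use z in auto)
  then show False using s assms by simp
qed

lemma pow2_ne3: "(2::nat) ^ k \<noteq> 3"
proof
  assume h: "(2::nat) ^ k = 3"
  then have "odd ((2::nat) ^ k)" by simp
  then have "k = 0" by simp
  then show False using h by simp
qed

lemma Bas31: "Bas n 3 1 = {}"
proof (rule ccontr)
  assume "Bas n 3 1 \<noteq> {}"
  then obtain m where m: "m \<in> Bas n 3 1" by blast
  let ?D = "{..<3::nat}\<times>{..<n}"
  let ?f = "\<lambda>(r,i). m r i"
  let ?g = "\<lambda>(r::nat,i). 2 ^ r * m r i"
  have s: "sum ?f ?D = 1" "sum ?g ?D = 3" using m unfolding Bas_iff deg_eq wt_eq by auto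
  have fD: "finite ?D" by simp
  obtain p where pD: "p \<in> ?D" and pnz: "?f p \<noteq> 0"
  proof (rule ccontr)
    assume "\<not> thesis"
    then have "\<forall>p\<in>?D. ?f p = 0" using that by blast
    then have "sum ?f ?D = 0" by simp
    then show False using s(1) by simp
  qed
  have r1: "sum ?f ?D = ?f p + sum ?f (?D - {p})" by (rule sum.remove[OF fD pD])
  then have fp: "?f p = 1" and rest: "sum ?f (?D - {p}) = 0" using s(1) pnz by linarith+
  have rz: "\<forall>q\<in>?D - {p}. ?f q = 0" using rest by simp
  have r2: "sum ?g ?D = ?g p + sum ?g (?D - {p})" by (rule sum.remove[OF fD pD])
  have gz: "\<forall>q\<in>?D - {p}. ?g q = 0"
  proof
    fix q assume q: "q \<in> ?D - {p}"
    have "?f q = 0" using q by (rule bspec[OF rz])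
    then show "?g q = 0" by (cases q) simp
  qed
  have "sum ?g (?D - {p}) = 0" by (rule sum.neutral[OF gz])
  then have gp: "?g p = 3" using r2 s(2) by linarith
  obtain r i where pri: "p = (r,i)" by (cases p)
  have g3: "2 ^ r * m r i = 3" using gp pri by simp
  have f1: "m r i = 1" using fp pri by simp
  have "(2::nat) ^ r = 3" using g3 f1 by simp
  then show False using pow2_ne3[of r] by blast
qed

lemma SK_all:
  assumes "Bas n d j = {}" shows "SK n d (Suc j) = Xsp n d (Suc j)"
proof
  show "SK n d (Suc j) \<subseteq> Xsp n d (Suc j)" unfolding SK_def by blast
next
  show "Xsp n d (Suc j) \<subseteq> SK n d (Suc j)"
  proof
    fix S assume "S \<in> Xsp n d (Suc j)"
    then have S: "S \<subseteq> Bas n d (Suc j)" by (simp add: Xsp_def)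
    have "dmono m = {}" if "m \<in> S" for m using dmono_Bas[of m n d j] that S assms by blast
    then have "xs dmono S = {}" using xs_sub[of dmono S] by blast
    then show "S \<in> SK n d (Suc j)" using S by (simp add: SK_iff)
  qed
qed

theorem proposition7p2:
  fixes n d :: nat
  shows "SK n d d = Lam n d
    \<and> {S \<in> Xsp n d d. dlin S = {}} = Lam n d
    \<and> SK n 1 0 = {{}}
    \<and> SK n 2 1 = Xsp n 2 1
    \<and> SK n 3 2 = Xsp n 3 2
    \<and> (1 \<le> d \<longrightarrow> SK n d (d - 1) = dlin ` Xsp n d d)
    \<and> (\<forall>i. i + 1 < d \<longrightarrow>
          SK n d i = dlin ` Xsp n d (Suc i)
        \<and> {S \<in> Xsp n d (Suc i). dlin S = {}} = dlin ` Xsp n d (i + 2)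
        \<and> dlin ` Xsp n d (Suc i) = SK n d i)"
proof (intro conjI impI allI)
  show t: "SK n d d = Lam n d" by (rule top)
  show "{S \<in> Xsp n d d. dlin S = {}} = Lam n d" using t unfolding SK_def .
  show "SK n 1 0 = {{}}"
  proof -
    have "Bas n 1 0 = {}" by (rule Bas0) simp
    then have "Xsp n 1 0 = {{}}" by (simp add: Xsp_def)
    moreover have d0: "dlin {} = {}" by (simp add: dlin_xs)
    ultimately show ?thesis unfolding SK_def by blast
  qed
  show "SK n 2 1 = Xsp n 2 1"
  proof -
    have "Bas n 2 0 = {}" by (rule Bas0) simp
    then have "SK n 2 (Suc 0) = Xsp n 2 (Suc 0)" by (rule SK_all)
    then show ?thesis by simp
  qed
  show "SK n 3 2 = Xsp n 3 2"
  proof -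
    have "SK n 3 (Suc 1) = Xsp n 3 (Suc 1)" by (rule SK_all[OF Bas31])
    then show ?thesis by (simp add: numeral_2_eq_2)
  qed
  show "SK n d (d - 1) = dlin ` Xsp n d d" if d1: "1 \<le> d"
  proof -
    have "d - 1 < d" using d1 by simp
    then have "SK n d (d - 1) = dlin ` Xsp n d (Suc (d - 1))" by (rule exact)
    moreover have "Suc (d - 1) = d" using d1 by simp
    ultimately show ?thesis by simp
  qed
  fix i assume i: "i + 1 < d"
  have e1: "SK n d i = dlin ` Xsp n d (Suc i)" by (rule exact) (use i in simp)
  have e2: "SK n d (Suc i) = dlin ` Xsp n d (Suc (Suc i))" by (rule exact) (use i in simp)
  show "SK n d i = dlin ` Xsp n d (Suc i)" by (rule e1)
  show "{S \<in> Xsp n d (Suc i). dlin S = {}} = dlin ` Xsp n d (i + 2)"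
    using e2 unfolding SK_def by (simp add: numeral_2_eq_2)
  show "dlin ` Xsp n d (Suc i) = SK n d i" by (rule e1[symmetric])
qed


end
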